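(* Fix an event set $\hat\Sigma$, a function $\hat\Sigma_{uc}:\hat\Sigma\to NCFD$, and a bi-fuzzy language $\hat M$ with $pr(\hat M)=\hat M$; controllability below is with respect to $\hat M$ and $\hat\Sigma_{uc}$. Let $\hat K_1,\hat K_2$ be bi-fuzzy languages over $\hat\Sigma$. Then: 1) if $\hat K_1$ and $\hat K_2$ are bi-fuzzy controllable, then $\hat K_1\cup\hat K_2$ is bi-fuzzy controllable; 2) if $pr(\hat K_1)=\hat K_1$ and $pr(\hat K_2)=\hat K_2$, then $pr(\hat K_1\cup\hat K_2)=\hat K_1\cup\hat K_2$; 3) if $\hat K_1$ and $\hat K_2$ are bi-fuzzy controllable and $pr(\hat K_1)\cap pr(\hat K_2)=pr(\hat K_1\cap\hat K_2)$, then $\hat K_1\cap\hat K_2$ is bi-fuzzy controllable; 4) if $pr(\hat K_i)=\hat K_i$ and $\hat K_i$ is bi-fuzzy controllable for $i=1,2$, then $pr(\hat K_1)\cap pr(\hat K_2)=pr(\hat K_1\cap\hat K_2)$ and $\hat K_1\cap\hat K_2$ is bi-fuzzy controllable.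
   Context: $NCFD$ is the set of normal convex type-1 fuzzy sets $\mu:[0,1]\to[0,1]$ ($\max_u\mu(u)=1$, and $\mu(u_j)\ge\min\{\mu(u_i),\mu(u_k)\}$ for $u_i\le u_j\le u_k$). Operations: $(\mu_1\sqcup\mu_2)(v)=\sup\{\min(\mu_1(u),\mu_2(w)):\max(u,w)=v\}$, $(\mu_1\sqcap\mu_2)(v)=\sup\{\min(\mu_1(u),\mu_2(w)):\min(u,w)=v\}$; for arbitrary families, $(\bigsqcup_{i\in I}\mu_i)(v)=\sup\{\inf_i\mu_i(u_i):\sup_i u_i=v\}$. $\mu_1\sqsubseteq\mu_2$ iff $\mu_1\sqcap\mu_2=\mu_1$. A bi-fuzzy language over $\hat\Sigma$ is a function $\hat\Sigma^*\to NCFD$; $(\hat L\cap\hat H)(s)=\hat L(s)\sqcap\hat H(s)$, $(\hat L\cup\hat H)(s)=\hat L(s)\sqcup\hat H(s)$, $\hat L\subseteq\hat H$ iff $\hat L(s)\sqsubseteq\hat H(s)$ for all $s$. Prefix closure: $pr(\hat K)(s)=\bigsqcup_{u\in\hat\Sigma^*}\hat K(su)$. A bi-fuzzy language $\hat K$ with $\hat K\subseteq\hat M$ is bi-fuzzy controllable (w.r.t. $\hat M$ and $\hat\Sigma_{uc}$) if for all $s\in\hat\Sigma^*$, $\sigma\in\hat\Sigma$: $pr(\hat K)(s)\sqcap\hat\Sigma_{uc}(\sigma)\sqcap\hat M(s\sigma)\sqsubseteq pr(\hat K)(s\sigma)$. *)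

theory Defs
  imports Main "HOL.Real"
begin

text \<open>A type-1 fuzzy set on [0,1] is represented as a function real => real;
  by convention it is 0 outside the unit interval.\<close>

type_synonym fuzzy = "real \<Rightarrow> real"

definition unit_iv :: "real set" where "unit_iv = {0..1}"

definition NCFD :: "fuzzy set" where
  "NCFD = {\<mu>. (\<forall>u. u \<notin> unit_iv \<longrightarrow> \<mu> u = 0)
             \<and> (\<forall>u \<in> unit_iv. 0 \<le> \<mu> u \<and> \<mu> u \<le> 1)
             \<and> (\<exists>u \<in> unit_iv. \<mu> u = 1)
             \<and> (\<forall>ui \<in> unit_iv. \<forall>uj \<in> unit_iv. \<forall>uk \<in> unit_iv.
                   ui \<le> uj \<and> uj \<le> uk \<longrightarrow> \<mu> uj \<ge> min (\<mu> ui) (\<mu> uk))}"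

definition fjoin :: "fuzzy \<Rightarrow> fuzzy \<Rightarrow> fuzzy" where
  "fjoin \<mu>1 \<mu>2 = (\<lambda>v. if v \<in> unit_iv then
      Sup {min (\<mu>1 u) (\<mu>2 w) | u w. u \<in> unit_iv \<and> w \<in> unit_iv \<and> max u w = v} else 0)"

definition fmeet :: "fuzzy \<Rightarrow> fuzzy \<Rightarrow> fuzzy" where
  "fmeet \<mu>1 \<mu>2 = (\<lambda>v. if v \<in> unit_iv then
      Sup {min (\<mu>1 u) (\<mu>2 w) | u w. u \<in> unit_iv \<and> w \<in> unit_iv \<and> min u w = v} else 0)"

definition fJoin :: "('i \<Rightarrow> fuzzy) \<Rightarrow> fuzzy" where
  "fJoin F = (\<lambda>v. if v \<in> unit_iv then
      Sup {Inf (range (\<lambda>i. F i (x i))) | x. (\<forall>i. x i \<in> unit_iv) \<and> Sup (range x) = v} else 0)"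

definition fle :: "fuzzy \<Rightarrow> fuzzy \<Rightarrow> bool" where
  "fle \<mu>1 \<mu>2 \<longleftrightarrow> fmeet \<mu>1 \<mu>2 = \<mu>1"

type_synonym 'a bflang = "'a list \<Rightarrow> fuzzy"

definition is_bflang :: "'a bflang \<Rightarrow> bool" where
  "is_bflang L \<longleftrightarrow> (\<forall>s. L s \<in> NCFD)"

definition bf_inter :: "'a bflang \<Rightarrow> 'a bflang \<Rightarrow> 'a bflang" where
  "bf_inter L H = (\<lambda>s. fmeet (L s) (H s))"

definition bf_union :: "'a bflang \<Rightarrow> 'a bflang \<Rightarrow> 'a bflang" where
  "bf_union L H = (\<lambda>s. fjoin (L s) (H s))"

definition bf_subset :: "'a bflang \<Rightarrow> 'a bflang \<Rightarrow> bool" where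
  "bf_subset L H \<longleftrightarrow> (\<forall>s. fle (L s) (H s))"

definition pr :: "'a bflang \<Rightarrow> 'a bflang" where
  "pr K = (\<lambda>s. fJoin (\<lambda>u :: 'a list. K (s @ u)))"

definition bf_controllable :: "'a bflang \<Rightarrow> 'a bflang \<Rightarrow> ('a \<Rightarrow> fuzzy) \<Rightarrow> bool" where
  "bf_controllable K M Sig_uc \<longleftrightarrow> bf_subset K M \<and>
     (\<forall>s \<sigma>. fle (fmeet (fmeet (pr K s) (Sig_uc \<sigma>)) (M (s @ [\<sigma>]))) (pr K (s @ [\<sigma>])))"

end

theory Submission
  imports Defs
begin


lemma I_iff[simp]: "u \<in> unit_iv \<longleftrightarrow> 0 \<le> u \<and> u \<le> (1::real)"
  by (simp add: unit_iv_def)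

lemma NCFD_D:
  assumes "f \<in> NCFD"
  shows "\<And>u. \<not> (0 \<le> u \<and> u \<le> 1) \<Longrightarrow> f u = 0"
    "\<And>u. 0 \<le> u \<Longrightarrow> u \<le> 1 \<Longrightarrow> 0 \<le> f u"
    "\<And>u. 0 \<le> u \<Longrightarrow> u \<le> 1 \<Longrightarrow> f u \<le> 1"
    "\<exists>p. 0 \<le> p \<and> p \<le> 1 \<and> f p = 1"
    "\<And>a b c. 0 \<le> a \<Longrightarrow> c \<le> 1 \<Longrightarrow> a \<le> b \<Longrightarrow> b \<le> c \<Longrightarrow> min (f a) (f c) \<le> f b"
  using assms unfolding NCFD_def by auto

lemma mono_left:
  assumes "f \<in> NCFD" "0 \<le> u" "u \<le> v" "v \<le> p" "p \<le> 1" "f p = 1"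
  shows "f u \<le> f v"
proof -
  have "min (f u) (f p) \<le> f v" by (rule NCFD_D(5)[OF assms(1)]) (use assms in auto)
  then show ?thesis using assms NCFD_D(3)[OF assms(1), of u] NCFD_D(3)[OF assms(1), of v] by simp
qed

lemma mono_right:
  assumes "f \<in> NCFD" "0 \<le> p" "p \<le> u" "u \<le> v" "v \<le> 1" "f p = 1"
  shows "f v \<le> f u"
proof -
  have "min (f p) (f v) \<le> f u" by (rule NCFD_D(5)[OF assms(1)]) (use assms in auto)
  then show ?thesis using assms NCFD_D(3)[OF assms(1), of u] NCFD_D(3)[OF assms(1), of v] by simp
qed

definition Lf :: "fuzzy \<Rightarrow> real \<Rightarrow> real" where
  "Lf f v = Sup {f u | u. u \<in> unit_iv \<and> u \<le> v}"
definition Rf :: "fuzzy \<Rightarrow> real \<Rightarrow> real" where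
  "Rf f v = Sup {f u | u. u \<in> unit_iv \<and> v \<le> u}"

lemma Lf_peak:
  assumes f: "f \<in> NCFD" and p: "0 \<le> p" "p \<le> 1" "f p = 1" and v: "0 \<le> v" "v \<le> 1"
  shows "Lf f v = (if p \<le> v then 1 else f v)"
proof (cases "p \<le> v")
  case True
  have "Sup {f u | u. u \<in> unit_iv \<and> u \<le> v} = 1"
    apply (rule cSup_eq_maximum)
    using p True NCFD_D(3)[OF f] by auto
  then show ?thesis using True by (simp add: Lf_def)
next
  case False
  have "Sup {f u | u. u \<in> unit_iv \<and> u \<le> v} = f v"
    apply (rule cSup_eq_maximum)
    using p False v mono_left[OF f, of _ v p] by auto
  then show ?thesis using False by (simp add: Lf_def)
qed

lemma Rf_peak:
  assumes f: "f \<in> NCFD" and p: "0 \<le> p" "p \<le> 1" "f p = 1" and v: "0 \<le> v" "v \<le> 1"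
  shows "Rf f v = (if v \<le> p then 1 else f v)"
proof (cases "v \<le> p")
  case True
  have "Sup {f u | u. u \<in> unit_iv \<and> v \<le> u} = 1"
    apply (rule cSup_eq_maximum)
    using p True NCFD_D(3)[OF f] v by auto
  then show ?thesis using True by (simp add: Rf_def)
next
  case False
  have "Sup {f u | u. u \<in> unit_iv \<and> v \<le> u} = f v"
    apply (rule cSup_eq_maximum)
    using p False v mono_right[OF f, of p v] by auto
  then show ?thesis using False by (simp add: Rf_def)
qed

lemma fmeet_peak:
  assumes f: "f \<in> NCFD" and p: "0 \<le> p" "p \<le> 1" "f p = 1"
    and g: "g \<in> NCFD" and q: "0 \<le> q" "q \<le> 1" "g q = 1" and v: "0 \<le> v" "v \<le> 1"
  shows "fmeet f g v = max (min (f v) (if v \<le> q then 1 else g v)) (min (if v \<le> p then 1 else f v) (g v))"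
proof -
  let ?S = "{min (f u) (g w) | u w. u \<in> unit_iv \<and> w \<in> unit_iv \<and> min u w = v}"
  let ?A = "min (f v) (if v \<le> q then 1 else g v)"
  let ?B = "min (if v \<le> p then 1 else f v) (g v)"
  have mem: "\<And>x u w. x = min (f u) (g w) \<Longrightarrow> u \<in> unit_iv \<Longrightarrow> w \<in> unit_iv \<Longrightarrow> min u w = v \<Longrightarrow> x \<in> ?S" by blast
  have A: "?A \<in> ?S"
  proof (cases "v \<le> q")
    case True
    then show ?thesis using q v by (intro mem[of _ v q]) auto
  next
    case False
    then show ?thesis using q v by (intro mem[of _ v v]) auto
  qed
  have B: "?B \<in> ?S"
  proof (cases "v \<le> p")
    case True
    then show ?thesis using p v by (intro mem[of _ p v]) auto
  next
    case False
    then show ?thesis using p v by (intro mem[of _ v v]) auto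
  qed
  have "Sup ?S = max ?A ?B"
  proof (rule cSup_eq_maximum)
    show "max ?A ?B \<in> ?S" using A B by (simp add: max_def)
  next
    fix x assume "x \<in> ?S"
    then obtain u w where uw: "0 \<le> u" "u \<le> 1" "0 \<le> w" "w \<le> 1" "min u w = v" "x = min (f u) (g w)"
      by auto
    show "x \<le> max ?A ?B"
    proof (cases "u \<le> w")
      case True
      then have "u = v" using uw by auto
      moreover have "g w \<le> (if v \<le> q then 1 else g v)"
        using NCFD_D(3)[OF g, of w] mono_right[OF g, of q v w] uw True q \<open>u = v\<close> by auto
      ultimately show ?thesis using uw by auto
    next
      case False
      then have "w = v" using uw by auto
      moreover have "f u \<le> (if v \<le> p then 1 else f v)"
        using NCFD_D(3)[OF f, of u] mono_right[OF f, of p v u] uw False p \<open>w = v\<close> by auto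
      ultimately show ?thesis using uw by auto
    qed
  qed
  then show ?thesis using v by (simp add: fmeet_def)
qed

lemma fjoin_peak:
  assumes f: "f \<in> NCFD" and p: "0 \<le> p" "p \<le> 1" "f p = 1"
    and g: "g \<in> NCFD" and q: "0 \<le> q" "q \<le> 1" "g q = 1" and v: "0 \<le> v" "v \<le> 1"
  shows "fjoin f g v = max (min (f v) (if q \<le> v then 1 else g v)) (min (if p \<le> v then 1 else f v) (g v))"
proof -
  let ?S = "{min (f u) (g w) | u w. u \<in> unit_iv \<and> w \<in> unit_iv \<and> max u w = v}"
  let ?A = "min (f v) (if q \<le> v then 1 else g v)"
  let ?B = "min (if p \<le> v then 1 else f v) (g v)"
  have mem: "\<And>x u w. x = min (f u) (g w) \<Longrightarrow> u \<in> unit_iv \<Longrightarrow> w \<in> unit_iv \<Longrightarrow> max u w = v \<Longrightarrow> x \<in> ?S" by blast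
  have A: "?A \<in> ?S"
  proof (cases "q \<le> v")
    case True
    then show ?thesis using q v by (intro mem[of _ v q]) auto
  next
    case False
    then show ?thesis using q v by (intro mem[of _ v v]) auto
  qed
  have B: "?B \<in> ?S"
  proof (cases "p \<le> v")
    case True
    then show ?thesis using p v by (intro mem[of _ p v]) auto
  next
    case False
    then show ?thesis using p v by (intro mem[of _ v v]) auto
  qed
  have "Sup ?S = max ?A ?B"
  proof (rule cSup_eq_maximum)
    show "max ?A ?B \<in> ?S" using A B by (simp add: max_def)
  next
    fix x assume "x \<in> ?S"
    then obtain u w where uw: "0 \<le> u" "u \<le> 1" "0 \<le> w" "w \<le> 1" "max u w = v" "x = min (f u) (g w)"
      by auto
    show "x \<le> max ?A ?B"
    proof (cases "w \<le> u")
      case True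
      then have "u = v" using uw by auto
      moreover have "g w \<le> (if q \<le> v then 1 else g v)"
        using NCFD_D(3)[OF g, of w] mono_left[OF g, of w v q] uw True q \<open>u = v\<close> by auto
      ultimately show ?thesis using uw by auto
    next
      case False
      then have "w = v" using uw by auto
      moreover have "f u \<le> (if p \<le> v then 1 else f v)"
        using NCFD_D(3)[OF f, of u] mono_left[OF f, of u v p] uw False p \<open>w = v\<close> by auto
      ultimately show ?thesis using uw by auto
    qed
  qed
  then show ?thesis using v by (simp add: fjoin_def)
qed


lemma unimodal_NCFD:
  fixes h :: fuzzy
  assumes "\<And>u. \<not> (0 \<le> u \<and> u \<le> 1) \<Longrightarrow> h u = 0"
    "\<And>u. 0 \<le> u \<Longrightarrow> u \<le> 1 \<Longrightarrow> 0 \<le> h u \<and> h u \<le> 1"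
    "0 \<le> r" "r \<le> 1" "h r = 1"
    "\<And>u v. 0 \<le> u \<Longrightarrow> u \<le> v \<Longrightarrow> v \<le> r \<Longrightarrow> h u \<le> h v"
    "\<And>u v. r \<le> u \<Longrightarrow> u \<le> v \<Longrightarrow> v \<le> 1 \<Longrightarrow> h v \<le> h u"
  shows "h \<in> NCFD"
  unfolding NCFD_def
proof (intro CollectI conjI ballI allI impI)
  fix ui uj uk assume "ui \<in> unit_iv" "uj \<in> unit_iv" "uk \<in> unit_iv" "ui \<le> uj \<and> uj \<le> uk"
  then show "min (h ui) (h uk) \<le> h uj"
    using assms(6)[of ui uj] assms(7)[of uj uk] by (cases "uj \<le> r") auto
qed (use assms in auto)

lemma peak: assumes "f \<in> NCFD" obtains p where "0 \<le> p" "p \<le> 1" "f p = 1"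
  using NCFD_D(4)[OF assms] by blast

lemma fmeet_out: "\<not> (0 \<le> v \<and> v \<le> 1) \<Longrightarrow> fmeet f g v = 0"
  unfolding fmeet_def by auto
lemma fjoin_out: "\<not> (0 \<le> v \<and> v \<le> 1) \<Longrightarrow> fjoin f g v = 0"
  unfolding fjoin_def by auto

lemma fmeet_props:
  assumes f: "f \<in> NCFD" and g: "g \<in> NCFD"
  shows "fmeet f g \<in> NCFD"
    "\<And>v::real. 0 \<le> v \<Longrightarrow> v \<le> 1 \<Longrightarrow> Lf (fmeet f g) v = max (Lf f v) (Lf g v)"
    "\<And>v::real. 0 \<le> v \<Longrightarrow> v \<le> 1 \<Longrightarrow> Rf (fmeet f g) v = min (Rf f v) (Rf g v)"
proof -
  obtain p where p: "0 \<le> p" "p \<le> 1" "f p = 1" using peak[OF f] by blast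
  obtain q where q: "0 \<le> q" "q \<le> 1" "g q = 1" using peak[OF g] by blast
  define r where "r = min p q"
  note F = fmeet_peak[OF f p g q]
  note fb = NCFD_D(2,3)[OF f] and gb = NCFD_D(2,3)[OF g]
  have hr: "fmeet f g r = 1" using F[of r] p q fb[of r] gb[of r] unfolding r_def
    by (auto simp: min_def max_def)
  show h: "fmeet f g \<in> NCFD"
  proof (rule unimodal_NCFD[where r=r])
    fix u :: real assume "0 \<le> u" "u \<le> 1"
    then show "0 \<le> fmeet f g u \<and> fmeet f g u \<le> 1" using F[of u] fb[of u] gb[of u]
      by (auto simp: min_def max_def)
  next
    fix u v :: real assume uv: "0 \<le> u" "u \<le> v" "v \<le> r"
    then have "f u \<le> f v" "g u \<le> g v"
      using mono_left[OF f uv(1,2) _ p(2,3)] mono_left[OF g uv(1,2) _ q(2,3)] r_def by auto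
    moreover have "v \<le> p" "v \<le> q" "u \<le> p" "u \<le> q" "0 \<le> v" using uv r_def by auto
    moreover have "fmeet f g u = max (f u) (g u)" "fmeet f g v = max (f v) (g v)"
      using F[of u] F[of v] calculation uv p q fb gb by auto
    ultimately show "fmeet f g u \<le> fmeet f g v" by auto
  next
    fix u v :: real assume uv: "r \<le> u" "u \<le> v" "v \<le> 1"
    have a: "p \<le> u \<Longrightarrow> f v \<le> f u" using mono_right[OF f p(1) _ uv(2,3) p(3)] by auto
    have b: "q \<le> u \<Longrightarrow> g v \<le> g u" using mono_right[OF g q(1) _ uv(2,3) q(3)] by auto
    have c: "p \<le> u \<or> q \<le> u" using uv r_def by auto
    have u1: "0 \<le> u" "u \<le> 1" "0 \<le> v" using uv p q r_def by auto
    have Rq: "(if v \<le> q then 1 else g v) \<le> (if u \<le> q then 1 else g u)"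
      using b uv gb[of v] u1 by auto
    have Rp: "(if v \<le> p then 1 else f v) \<le> (if u \<le> p then 1 else f u)"
      using a uv fb[of v] u1 by auto
    show "fmeet f g v \<le> fmeet f g u"
    proof (cases "p \<le> u")
      case True
      have e: "(if u \<le> p then 1 else f u) = f u" "(if v \<le> p then 1 else f v) = f v"
        using True uv p by (smt (verit))+
      have "fmeet f g u = min (f u) (if u \<le> q then 1 else g u)"
        using F[of u] u1 e gb[of u] by (auto simp: max_def min_def)
      moreover have "fmeet f g v = min (f v) (if v \<le> q then 1 else g v)"
        using F[of v] u1 uv e gb[of v] by (auto simp: max_def min_def)
      ultimately show ?thesis using a True Rq by (auto simp: min_def)
    next
      case False
      then have qu: "q \<le> u" using c by auto
      have e: "(if u \<le> q then 1 else g u) = g u" "(if v \<le> q then 1 else g v) = g v"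
        using qu uv q by (smt (verit))+
      have "fmeet f g u = min (if u \<le> p then 1 else f u) (g u)"
        using F[of u] u1 e fb[of u] by (auto simp: max_def min_def)
      moreover have "fmeet f g v = min (if v \<le> p then 1 else f v) (g v)"
        using F[of v] u1 uv e fb[of v] by (auto simp: max_def min_def)
      ultimately show ?thesis using b qu Rp by (auto simp: min_def)
    qed
  qed (use fmeet_out p q r_def hr in auto)
  fix v :: real assume v: "0 \<le> v" "v \<le> 1"
  have hrr: "0 \<le> r" "r \<le> 1" using p q r_def by auto
  show "Lf (fmeet f g) v = max (Lf f v) (Lf g v)"
    using Lf_peak[OF h hrr hr v] Lf_peak[OF f p v] Lf_peak[OF g q v] F[of v] v fb[of v] gb[of v]
    unfolding r_def by (auto simp: min_def max_def)
  show "Rf (fmeet f g) v = min (Rf f v) (Rf g v)"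
    using Rf_peak[OF h hrr hr v] Rf_peak[OF f p v] Rf_peak[OF g q v] F[of v] v fb[of v] gb[of v]
    unfolding r_def by (auto simp: min_def max_def)
qed

lemma fjoin_props:
  assumes f: "f \<in> NCFD" and g: "g \<in> NCFD"
  shows "fjoin f g \<in> NCFD"
    "\<And>v::real. 0 \<le> v \<Longrightarrow> v \<le> 1 \<Longrightarrow> Lf (fjoin f g) v = min (Lf f v) (Lf g v)"
    "\<And>v::real. 0 \<le> v \<Longrightarrow> v \<le> 1 \<Longrightarrow> Rf (fjoin f g) v = max (Rf f v) (Rf g v)"
proof -
  obtain p where p: "0 \<le> p" "p \<le> 1" "f p = 1" using peak[OF f] by blast
  obtain q where q: "0 \<le> q" "q \<le> 1" "g q = 1" using peak[OF g] by blast
  define r where "r = max p q"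
  note F = fjoin_peak[OF f p g q]
  note fb = NCFD_D(2,3)[OF f] and gb = NCFD_D(2,3)[OF g]
  have hr: "fjoin f g r = 1" using F[of r] p q fb[of r] gb[of r] unfolding r_def
    by (auto simp: min_def max_def)
  show h: "fjoin f g \<in> NCFD"
  proof (rule unimodal_NCFD[where r=r])
    fix u :: real assume "0 \<le> u" "u \<le> 1"
    then show "0 \<le> fjoin f g u \<and> fjoin f g u \<le> 1" using F[of u] fb[of u] gb[of u]
      by (auto simp: min_def max_def)
  next
    fix u v :: real assume uv: "r \<le> u" "u \<le> v" "v \<le> 1"
    have a: "f v \<le> f u" "g v \<le> g u"
      using mono_right[OF f p(1) _ uv(2,3) p(3)] mono_right[OF g q(1) _ uv(2,3) q(3)] uv r_def by auto
    moreover have "p \<le> v" "q \<le> v" "p \<le> u" "q \<le> u" "0 \<le> u" using uv r_def p by auto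
    moreover have "fjoin f g u = max (f u) (g u)" "fjoin f g v = max (f v) (g v)"
      using F[of u] F[of v] calculation uv p q fb gb by auto
    ultimately show "fjoin f g v \<le> fjoin f g u" by auto
  next
    fix u v :: real assume uv: "0 \<le> u" "u \<le> v" "v \<le> r"
    have a: "v \<le> p \<Longrightarrow> f u \<le> f v" using mono_left[OF f uv(1,2) _ p(2,3)] by auto
    have b: "v \<le> q \<Longrightarrow> g u \<le> g v" using mono_left[OF g uv(1,2) _ q(2,3)] by auto
    have c: "v \<le> p \<or> v \<le> q" using uv r_def by auto
    have u1: "0 \<le> v" "v \<le> 1" "u \<le> 1" using uv p q r_def by auto
    have Lq: "(if q \<le> u then 1 else g u) \<le> (if q \<le> v then 1 else g v)"
      using b uv gb[of u] u1 by auto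
    have Lp: "(if p \<le> u then 1 else f u) \<le> (if p \<le> v then 1 else f v)"
      using a uv fb[of u] u1 by auto
    show "fjoin f g u \<le> fjoin f g v"
    proof (cases "v \<le> p")
      case True
      have e: "(if p \<le> u then 1 else f u) = f u" "(if p \<le> v then 1 else f v) = f v"
        using True uv p by (smt (verit))+
      have "fjoin f g u = min (f u) (if q \<le> u then 1 else g u)"
        using F[of u] u1 uv e gb[of u] by (auto simp: max_def min_def)
      moreover have "fjoin f g v = min (f v) (if q \<le> v then 1 else g v)"
        using F[of v] u1 uv e gb[of v] by (auto simp: max_def min_def)
      ultimately show ?thesis using a True Lq by (auto simp: min_def)
    next
      case False
      then have qu: "v \<le> q" using c by auto
      have e: "(if q \<le> u then 1 else g u) = g u" "(if q \<le> v then 1 else g v) = g v"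
        using qu uv q by (smt (verit))+
      have "fjoin f g u = min (if p \<le> u then 1 else f u) (g u)"
        using F[of u] u1 uv e fb[of u] by (auto simp: max_def min_def)
      moreover have "fjoin f g v = min (if p \<le> v then 1 else f v) (g v)"
        using F[of v] u1 uv e fb[of v] by (auto simp: max_def min_def)
      ultimately show ?thesis using b qu Lp by (auto simp: min_def)
    qed
  qed (use fjoin_out p q r_def hr in auto)
  fix v :: real assume v: "0 \<le> v" "v \<le> 1"
  have hrr: "0 \<le> r" "r \<le> 1" using p q r_def by auto
  show "Lf (fjoin f g) v = min (Lf f v) (Lf g v)"
    using Lf_peak[OF h hrr hr v] Lf_peak[OF f p v] Lf_peak[OF g q v] F[of v] v fb[of v] gb[of v]
    unfolding r_def by (auto simp: min_def max_def)
  show "Rf (fjoin f g) v = max (Rf f v) (Rf g v)"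
    using Rf_peak[OF h hrr hr v] Rf_peak[OF f p v] Rf_peak[OF g q v] F[of v] v fb[of v] gb[of v]
    unfolding r_def by (auto simp: min_def max_def)
qed

lemma ncfd_LR:
  assumes f: "f \<in> NCFD" and v: "0 \<le> v" "v \<le> 1"
  shows "f v = min (Lf f v) (Rf f v)"
proof -
  obtain p where p: "0 \<le> p" "p \<le> 1" "f p = 1" using peak[OF f] by blast
  show ?thesis using Lf_peak[OF f p v] Rf_peak[OF f p v] NCFD_D(3)[OF f v] p
    by (smt (verit))
qed

lemma ncfd_eqI:
  assumes f: "f \<in> NCFD" and g: "g \<in> NCFD"
    and "\<And>v::real. 0 \<le> v \<Longrightarrow> v \<le> 1 \<Longrightarrow> Lf f v = Lf g v"
    and "\<And>v::real. 0 \<le> v \<Longrightarrow> v \<le> 1 \<Longrightarrow> Rf f v = Rf g v"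
  shows "f = g"
proof
  fix v show "f v = g v"
  proof (cases "0 \<le> v \<and> v \<le> 1")
    case True then show ?thesis using ncfd_LR[OF f] ncfd_LR[OF g] assms(3,4) by auto
  next
    case False then show ?thesis using NCFD_D(1)[OF f] NCFD_D(1)[OF g] by auto
  qed
qed

lemma fle_iff:
  assumes f: "f \<in> NCFD" and g: "g \<in> NCFD"
  shows "fle f g \<longleftrightarrow> (\<forall>v. 0 \<le> v \<and> v \<le> 1 \<longrightarrow> Lf g v \<le> Lf f v \<and> Rf f v \<le> Rf g v)"
proof
  assume "fle f g"
  then have e: "fmeet f g = f" by (simp add: fle_def)
  show "\<forall>v. 0 \<le> v \<and> v \<le> 1 \<longrightarrow> Lf g v \<le> Lf f v \<and> Rf f v \<le> Rf g v"
    using fmeet_props(2,3)[OF f g] e by (metis max.cobounded2 min.cobounded2)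
next
  assume a: "\<forall>v. 0 \<le> v \<and> v \<le> 1 \<longrightarrow> Lf g v \<le> Lf f v \<and> Rf f v \<le> Rf g v"
  have "fmeet f g = f"
    by (rule ncfd_eqI[OF fmeet_props(1)[OF f g] f]) (use a fmeet_props(2,3)[OF f g] in auto)
  then show "fle f g" by (simp add: fle_def)
qed

lemma Lf_ge:
  assumes f: "f \<in> NCFD" and "0 \<le> u" "u \<le> v" "v \<le> 1"
  shows "f u \<le> Lf f v"
  unfolding Lf_def
  by (rule cSup_upper) (use assms NCFD_D(3)[OF f] in \<open>auto intro!: bdd_aboveI[of _ 1]\<close>)

lemma Rf_ge:
  assumes f: "f \<in> NCFD" and "0 \<le> v" "v \<le> u" "u \<le> 1"
  shows "f u \<le> Rf f v"
  unfolding Rf_def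
  by (rule cSup_upper) (use assms NCFD_D(3)[OF f] in \<open>auto intro!: bdd_aboveI[of _ 1]\<close>)

lemma Rf_le:
  assumes "0 \<le> v" "v \<le> 1" "\<And>u. v \<le> u \<Longrightarrow> u \<le> 1 \<Longrightarrow> f u \<le> c"
  shows "Rf f v \<le> c"
  unfolding Rf_def
  by (rule cSup_least) (use assms in auto)

lemma Lf_le:
  assumes "0 \<le> v" "v \<le> 1" "\<And>u. 0 \<le> u \<Longrightarrow> u \<le> v \<Longrightarrow> f u \<le> c"
  shows "Lf f v \<le> c"
  unfolding Lf_def
  by (rule cSup_least) (use assms in auto)

lemma rng_sup:
  fixes x :: "'i \<Rightarrow> real"
  assumes "\<forall>i. 0 \<le> x i \<and> x i \<le> c"
  shows "bdd_above (range x)" "bdd_below (range x)" "\<And>i. x i \<le> Sup (range x)"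
    "\<And>i. Inf (range x) \<le> x i" "0 \<le> Sup (range x)" "Sup (range x) \<le> c"
    "0 \<le> Inf (range x)" "Inf (range x) \<le> c"
proof -
  show b1: "bdd_above (range x)" using assms by (auto intro!: bdd_aboveI[of _ c])
  show b2: "bdd_below (range x)" using assms by (auto intro!: bdd_belowI[of _ 0])
  show s: "\<And>i. x i \<le> Sup (range x)" by (rule cSUP_upper[OF _ b1]) auto
  show s2: "\<And>i. Inf (range x) \<le> x i" by (rule cINF_lower[OF b2]) auto
  show "0 \<le> Sup (range x)" using s[of undefined] assms by (meson order_trans)
  show "Sup (range x) \<le> c" by (rule cSUP_least) (use assms in auto)
  show "0 \<le> Inf (range x)" by (rule cINF_greatest) (use assms in auto)
  show "Inf (range x) \<le> c" using s2[of undefined] assms by (meson order_trans)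
qed

lemma fJoin_ge:
  fixes F :: "'i \<Rightarrow> fuzzy"
  assumes F: "\<forall>i. F i \<in> NCFD" and x: "\<forall>i. 0 \<le> x i \<and> x i \<le> 1"
  shows "Inf (range (\<lambda>i. F i (x i))) \<le> fJoin F (Sup (range x))"
proof -
  have Fx: "\<forall>i. 0 \<le> F i (x i) \<and> F i (x i) \<le> 1" using F x NCFD_D(2,3) by blast
  have sx: "0 \<le> Sup (range x)" "Sup (range x) \<le> 1" using rng_sup[OF x] by auto
  have "Inf (range (\<lambda>i. F i (x i))) \<le> Sup {Inf (range (\<lambda>i. F i (y i))) | y. (\<forall>i. y i \<in> unit_iv) \<and> Sup (range y) = Sup (range x)}"
  proof (rule cSup_upper)
    show "bdd_above {Inf (range (\<lambda>i. F i (y i))) | y. (\<forall>i. y i \<in> unit_iv) \<and> Sup (range y) = Sup (range x)}"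
    proof (rule bdd_aboveI[of _ 1], clarify)
      fix y :: "'i \<Rightarrow> real" assume "\<forall>i. y i \<in> unit_iv"
      then have "\<forall>i. 0 \<le> F i (y i) \<and> F i (y i) \<le> 1" using F NCFD_D(2,3) by auto
      then show "Inf (range (\<lambda>i. F i (y i))) \<le> 1" by (rule rng_sup(8)[where x="\<lambda>i. F i (y i)"])
    qed
  qed (use x in auto)
  then show ?thesis using sx unfolding fJoin_def by auto
qed

lemma fJoin_le:
  fixes F :: "'i \<Rightarrow> fuzzy"
  assumes "0 \<le> v" "v \<le> 1"
    "\<And>x. \<forall>i. 0 \<le> x i \<and> x i \<le> 1 \<Longrightarrow> Sup (range x) = v \<Longrightarrow> Inf (range (\<lambda>i. F i (x i))) \<le> c"
  shows "fJoin F v \<le> c"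
proof -
  have "Sup {Inf (range (\<lambda>i. F i (x i))) | x. (\<forall>i. x i \<in> unit_iv) \<and> Sup (range x) = v} \<le> c"
  proof (rule cSup_least)
    have e: "Sup (range (\<lambda>i::'i. v)) = v" by simp
    have "Inf (range (\<lambda>i. F i v)) \<in> {Inf (range (\<lambda>i. F i (x i))) | x. (\<forall>i. x i \<in> unit_iv) \<and> Sup (range x) = v}"
      unfolding mem_Collect_eq by (rule exI[of _ "\<lambda>i. v"]) (use assms(1,2) e in simp)
    then show "{Inf (range (\<lambda>i. F i (x i))) | x. (\<forall>i. x i \<in> unit_iv) \<and> Sup (range x) = v} \<noteq> {}"
      by (metis empty_iff)
  next
    fix y assume "y \<in> {Inf (range (\<lambda>i. F i (x i))) | x. (\<forall>i. x i \<in> unit_iv) \<and> Sup (range x) = v}"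
    then obtain x where x: "\<forall>i. x i \<in> unit_iv" "Sup (range x) = v" "y = Inf (range (\<lambda>i. F i (x i)))"
      by blast
    have "\<forall>i. 0 \<le> x i \<and> x i \<le> 1" using x(1) by simp
    then show "y \<le> c" using assms(3)[of x] x(2,3) by simp
  qed
  then show ?thesis using assms(1,2) unfolding fJoin_def by simp
qed

lemma fJoin_lessD:
  fixes F :: "'i \<Rightarrow> fuzzy"
  assumes "0 \<le> v" "v \<le> 1" "c < fJoin F v"
  obtains x where "\<forall>i. 0 \<le> x i \<and> x i \<le> 1" "Sup (range x) = v" "c < Inf (range (\<lambda>i. F i (x i)))"
proof -
  have "\<not> (\<forall>x. (\<forall>i. 0 \<le> x i \<and> x i \<le> 1) \<longrightarrow> Sup (range x) = v \<longrightarrow> Inf (range (\<lambda>i. F i (x i))) \<le> c)"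
  proof
    assume a: "\<forall>x. (\<forall>i. 0 \<le> x i \<and> x i \<le> 1) \<longrightarrow> Sup (range x) = v \<longrightarrow> Inf (range (\<lambda>i. F i (x i))) \<le> c"
    have "fJoin F v \<le> c" by (rule fJoin_le[OF assms(1,2)]) (use a in blast)
    then show False using assms(3) by simp
  qed
  then obtain x where "\<forall>i. 0 \<le> x i \<and> x i \<le> 1" "Sup (range x) = v" "\<not> Inf (range (\<lambda>i. F i (x i))) \<le> c"
    by blast
  then show ?thesis using that by simp
qed

lemma fJoin_out: "\<not> (0 \<le> v \<and> v \<le> 1) \<Longrightarrow> fJoin F v = 0"
  unfolding fJoin_def by auto

lemma fJoin_bounds:
  fixes F :: "'i \<Rightarrow> fuzzy"
  assumes F: "\<forall>i. F i \<in> NCFD" and v: "0 \<le> v" "v \<le> 1"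
  shows "0 \<le> fJoin F v" "fJoin F v \<le> 1"
proof -
  have x: "\<forall>i::'i. 0 \<le> (\<lambda>i. v) i \<and> (\<lambda>i. v) i \<le> 1" using v by auto
  have "\<forall>i. 0 \<le> F i v \<and> F i v \<le> 1" using F v NCFD_D(2,3) by blast
  then have "0 \<le> Inf (range (\<lambda>i. F i v))" by (rule rng_sup(7)[where x="\<lambda>i. F i v"])
  also have "\<dots> \<le> fJoin F (Sup (range (\<lambda>i::'i. v)))" using fJoin_ge[OF F x] by simp
  finally show "0 \<le> fJoin F v" by simp
  show "fJoin F v \<le> 1"
  proof (rule fJoin_le[OF v])
    fix x :: "'i \<Rightarrow> real" assume "\<forall>i. 0 \<le> x i \<and> x i \<le> 1"
    then have "\<forall>i. 0 \<le> F i (x i) \<and> F i (x i) \<le> 1" using F NCFD_D(2,3) by blast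
    then show "Inf (range (\<lambda>i. F i (x i))) \<le> 1" by (rule rng_sup(8)[where x="\<lambda>i. F i (x i)"])
  qed
qed

lemma peaks:
  fixes F :: "'i \<Rightarrow> fuzzy"
  assumes F: "\<forall>i. F i \<in> NCFD"
  obtains pk where "\<forall>i. 0 \<le> pk i \<and> pk i \<le> 1 \<and> F i (pk i) = 1"
proof -
  have "\<forall>i. \<exists>p. 0 \<le> p \<and> p \<le> 1 \<and> F i p = 1" using F NCFD_D(4) by blast
  from choice[OF this] obtain pk where "\<forall>i. 0 \<le> pk i \<and> pk i \<le> 1 \<and> F i (pk i) = 1" by blast
  then show ?thesis using that by blast
qed

lemma fJoin_NCFD:
  fixes F :: "'i \<Rightarrow> fuzzy"
  assumes F: "\<forall>i. F i \<in> NCFD"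
  shows "fJoin F \<in> NCFD"
  unfolding NCFD_def
proof (intro CollectI conjI ballI allI impI)
  fix u :: real assume "u \<notin> unit_iv" then show "fJoin F u = 0" using fJoin_out by auto
next
  fix u :: real assume "u \<in> unit_iv" then show "0 \<le> fJoin F u" "fJoin F u \<le> 1" using fJoin_bounds[OF F] by auto
next
  obtain pk where pk: "\<forall>i. 0 \<le> pk i \<and> pk i \<le> 1 \<and> F i (pk i) = 1" using peaks[OF F] by blast
  have px: "\<forall>i. 0 \<le> pk i \<and> pk i \<le> 1" using pk by auto
  have t: "0 \<le> Sup (range pk)" "Sup (range pk) \<le> 1" using rng_sup[OF px] by auto
  have "Inf (range (\<lambda>i. F i (pk i))) = 1" using pk by simp
  then have "1 \<le> fJoin F (Sup (range pk))" using fJoin_ge[OF F px] by simp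
  then have "fJoin F (Sup (range pk)) = 1" using fJoin_bounds[OF F t] by simp
  then show "\<exists>u\<in>unit_iv. fJoin F u = 1" using t by auto
next
  fix a b c :: real
  assume abc: "a \<in> unit_iv" "b \<in> unit_iv" "c \<in> unit_iv" "a \<le> b \<and> b \<le> c"
  show "min (fJoin F a) (fJoin F c) \<le> fJoin F b"
  proof (rule ccontr)
    assume "\<not> ?thesis"
    then have l1: "fJoin F b < fJoin F a" and l2: "fJoin F b < fJoin F c" by auto
    obtain x where x: "\<forall>i. 0 \<le> x i \<and> x i \<le> 1" "Sup (range x) = a" "fJoin F b < Inf (range (\<lambda>i. F i (x i)))"
      by (rule fJoin_lessD[OF _ _ l1]) (use abc in auto)
    obtain y where y: "\<forall>i. 0 \<le> y i \<and> y i \<le> 1" "Sup (range y) = c" "fJoin F b < Inf (range (\<lambda>i. F i (y i)))"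
      by (rule fJoin_lessD[OF _ _ l2]) (use abc in auto)
    define z where "z i = max (x i) (min (y i) b)" for i
    have z: "\<forall>i. 0 \<le> z i \<and> z i \<le> 1"
    proof
      fix i show "0 \<le> z i \<and> z i \<le> 1"
        using x(1)[rule_format, of i] y(1)[rule_format, of i] abc unfolding z_def by auto
    qed
    have zs: "Sup (range z) = b"
    proof (rule antisym)
      show "Sup (range z) \<le> b"
      proof (rule cSUP_least)
        fix i
        have "x i \<le> a" using rng_sup(3)[OF x(1), of i] x(2) by simp
        then show "z i \<le> b" using abc unfolding z_def by auto
      qed auto
    next
      show "b \<le> Sup (range z)"
      proof (rule ccontr)
        assume nb: "\<not> b \<le> Sup (range z)"
        have "\<forall>i. y i \<le> Sup (range z)"
        proof
          fix i
          have "min (y i) b \<le> Sup (range z)" using rng_sup(3)[OF z, of i] unfolding z_def by auto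
          then show "y i \<le> Sup (range z)" using nb by auto
        qed
        then have "Sup (range y) \<le> Sup (range z)" by (intro cSUP_least) auto
        then show False using y(2) nb abc by auto
      qed
    qed
    have Fx: "\<forall>i. 0 \<le> F i (x i) \<and> F i (x i) \<le> 1" using F x(1) NCFD_D(2,3) by blast
    have Fy: "\<forall>i. 0 \<le> F i (y i) \<and> F i (y i) \<le> 1" using F y(1) NCFD_D(2,3) by blast
    have "min (Inf (range (\<lambda>i. F i (x i)))) (Inf (range (\<lambda>i. F i (y i)))) \<le> Inf (range (\<lambda>i. F i (z i)))"
    proof (rule cINF_greatest)
      fix i
      have "min (F i (x i)) (F i (y i)) \<le> F i (z i)"
      proof (cases "x i \<le> min (y i) b")
        case True
        then have "z i = min (y i) b" unfolding z_def by auto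
        show ?thesis
          by (rule NCFD_D(5)[OF spec[OF F, of i]])
            (use \<open>z i = min (y i) b\<close> True x(1)[rule_format, of i] y(1)[rule_format, of i] in auto)
      next
        case False
        then show ?thesis unfolding z_def by auto
      qed
      moreover have "Inf (range (\<lambda>i. F i (x i))) \<le> F i (x i)" by (rule rng_sup(4)[OF Fx])
      moreover have "Inf (range (\<lambda>i. F i (y i))) \<le> F i (y i)" by (rule rng_sup(4)[OF Fy])
      ultimately show "min (Inf (range (\<lambda>i. F i (x i)))) (Inf (range (\<lambda>i. F i (y i)))) \<le> F i (z i)"
        by linarith
    qed auto
    also have "\<dots> \<le> fJoin F b" using fJoin_ge[OF F z] zs by simp
    finally show False using x(3) y(3) by linarith
  qed
qed



lemma LR_bounds:
  assumes f: "f \<in> NCFD" and v: "0 \<le> v" "v \<le> 1"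
  shows "0 \<le> Lf f v" "Lf f v \<le> 1" "0 \<le> Rf f v" "Rf f v \<le> 1"
proof -
  obtain p where p: "0 \<le> p" "p \<le> 1" "f p = 1" using peak[OF f] by blast
  show "0 \<le> Lf f v" "Lf f v \<le> 1" "0 \<le> Rf f v" "Rf f v \<le> 1"
    using Lf_peak[OF f p v] Rf_peak[OF f p v] NCFD_D(2,3)[OF f] v by auto
qed

lemma fJoin_L:
  fixes F :: "'i \<Rightarrow> fuzzy"
  assumes F: "\<forall>i. F i \<in> NCFD" and v: "0 \<le> v" "v \<le> 1"
  shows "Lf (fJoin F) v = Inf (range (\<lambda>i. Lf (F i) v))"
proof (rule antisym)
  have LB: "\<forall>i. 0 \<le> Lf (F i) v \<and> Lf (F i) v \<le> 1" using LR_bounds F v by blast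
  show "Lf (fJoin F) v \<le> Inf (range (\<lambda>i. Lf (F i) v))"
  proof (rule Lf_le[OF v])
    fix u assume u: "0 \<le> u" "u \<le> v"
    show "fJoin F u \<le> Inf (range (\<lambda>i. Lf (F i) v))"
    proof (rule fJoin_le)
      fix x :: "'i \<Rightarrow> real" assume x: "\<forall>i. 0 \<le> x i \<and> x i \<le> 1" "Sup (range x) = u"
      have Fx: "\<forall>i. 0 \<le> F i (x i) \<and> F i (x i) \<le> 1" using F x(1) NCFD_D(2,3) by blast
      show "Inf (range (\<lambda>i. F i (x i))) \<le> Inf (range (\<lambda>i. Lf (F i) v))"
      proof (rule cINF_greatest)
        fix i
        have "Inf (range (\<lambda>i. F i (x i))) \<le> F i (x i)" by (rule rng_sup(4)[OF Fx])
        also have "\<dots> \<le> Lf (F i) v"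
          using Lf_ge[OF spec[OF F, of i], of "x i" v] x rng_sup(3)[OF x(1), of i] u v by auto
        finally show "Inf (range (\<lambda>i. F i (x i))) \<le> Lf (F i) v" .
      qed auto
    qed (use u v in auto)
  qed
  obtain pk where pk: "\<forall>i. 0 \<le> pk i \<and> pk i \<le> 1 \<and> F i (pk i) = 1" using peaks[OF F] by blast
  define x where "x i = min v (pk i)" for i
  have x: "\<forall>i. 0 \<le> x i \<and> x i \<le> 1" using pk v unfolding x_def by auto
  have t: "0 \<le> Sup (range x)" "Sup (range x) \<le> v"
    using rng_sup(5)[OF x] by (auto intro!: cSUP_least simp: x_def)
  have e: "(\<lambda>i. Lf (F i) v) = (\<lambda>i. F i (x i))"
  proof
    fix i show "Lf (F i) v = F i (x i)"
      using Lf_peak[OF spec[OF F, of i], of "pk i" v] pk v unfolding x_def by auto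
  qed
  have "Inf (range (\<lambda>i. Lf (F i) v)) \<le> fJoin F (Sup (range x))"
    by (subst e) (rule fJoin_ge[OF F x])
  also have "\<dots> \<le> Lf (fJoin F) v"
    by (rule Lf_ge[OF fJoin_NCFD[OF F]]) (use t v in auto)
  finally show "Inf (range (\<lambda>i. Lf (F i) v)) \<le> Lf (fJoin F) v" .
qed

lemma fJoin_mono:
  fixes F H :: "'i \<Rightarrow> fuzzy"
  assumes F: "\<forall>i. F i \<in> NCFD" and H: "\<forall>i. H i \<in> NCFD" and le: "\<forall>i. fle (F i) (H i)"
  shows "fle (fJoin F) (fJoin H)"
  unfolding fle_iff[OF fJoin_NCFD[OF F] fJoin_NCFD[OF H]]
proof (intro allI impI conjI)
  fix v :: real assume v: "0 \<le> v \<and> v \<le> 1"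
  have le': "\<forall>i. Lf (H i) v \<le> Lf (F i) v \<and> Rf (F i) v \<le> Rf (H i) v"
    using le fle_iff F H v by blast
  have LB: "\<forall>i. 0 \<le> Lf (H i) v \<and> Lf (H i) v \<le> 1" using LR_bounds H v by blast
  have eF: "Lf (fJoin F) v = Inf (range (\<lambda>i. Lf (F i) v))" using fJoin_L[OF F] v by blast
  have eH: "Lf (fJoin H) v = Inf (range (\<lambda>i. Lf (H i) v))" using fJoin_L[OF H] v by blast
  show "Lf (fJoin H) v \<le> Lf (fJoin F) v"
    unfolding eF eH
  proof (intro cINF_greatest)
    fix i
    have "Inf (range (\<lambda>i. Lf (H i) v)) \<le> Lf (H i) v" by (rule rng_sup(4)[OF LB])
    then show "Inf (range (\<lambda>i. Lf (H i) v)) \<le> Lf (F i) v" using le' by (meson order_trans)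
  qed auto
  obtain qk where qk: "\<forall>i. 0 \<le> qk i \<and> qk i \<le> 1 \<and> H i (qk i) = 1" using peaks[OF H] by blast
  show "Rf (fJoin F) v \<le> Rf (fJoin H) v"
  proof (rule Rf_le)
    fix u assume u: "v \<le> u" "u \<le> 1"
    show "fJoin F u \<le> Rf (fJoin H) v"
    proof (rule fJoin_le)
      fix x :: "'i \<Rightarrow> real" assume x: "\<forall>i. 0 \<le> x i \<and> x i \<le> 1" "Sup (range x) = u"
      define z where "z i = max (x i) (qk i)" for i
      have z: "\<forall>i. 0 \<le> z i \<and> z i \<le> 1"
      proof
        fix i show "0 \<le> z i \<and> z i \<le> 1" using x(1)[rule_format, of i] qk[rule_format, of i] unfolding z_def by auto
      qed
      have Fx: "\<forall>i. 0 \<le> F i (x i) \<and> F i (x i) \<le> 1" using F x(1) NCFD_D(2,3) by blast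
      have "Inf (range (\<lambda>i. F i (x i))) \<le> Inf (range (\<lambda>i. H i (z i)))"
      proof (rule cINF_greatest)
        fix i
        have "F i (x i) \<le> H i (z i)"
        proof (cases "x i \<le> qk i")
          case True then show ?thesis using qk Fx unfolding z_def by auto
        next
          case False
          then have "H i (x i) = Rf (H i) (x i)"
            using Rf_peak[OF spec[OF H, of i], of "qk i" "x i"] qk x by auto
          moreover have "Rf (F i) (x i) \<le> Rf (H i) (x i)"
            using le fle_iff F H x by blast
          moreover have "F i (x i) \<le> Rf (F i) (x i)"
            using Rf_ge[OF spec[OF F, of i], of "x i" "x i"] x by auto
          ultimately show ?thesis using False unfolding z_def by auto
        qed
        then show "Inf (range (\<lambda>i. F i (x i))) \<le> H i (z i)"
          using rng_sup(4)[OF Fx, of i] by linarith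
      qed auto
      also have "\<dots> \<le> fJoin H (Sup (range z))" by (rule fJoin_ge[OF H z])
      also have "\<dots> \<le> Rf (fJoin H) v"
      proof (rule Rf_ge[OF fJoin_NCFD[OF H]])
        have "Sup (range x) \<le> Sup (range z)"
        proof (rule cSUP_least)
          fix i show "x i \<le> Sup (range z)" using rng_sup(3)[OF z, of i] unfolding z_def by auto
        qed auto
        then show "v \<le> Sup (range z)" using x u by auto
        show "Sup (range z) \<le> 1" using rng_sup(6)[OF z] .
      qed (use v in auto)
      finally show "Inf (range (\<lambda>i. F i (x i))) \<le> Rf (fJoin H) v" .
    qed (use u v in auto)
  qed (use v in auto)
qed

lemma fJoin_member:
  fixes F :: "'i \<Rightarrow> fuzzy"
  assumes F: "\<forall>i. F i \<in> NCFD"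
  shows "fle (F i0) (fJoin F)"
  unfolding fle_iff[OF spec[OF F] fJoin_NCFD[OF F]]
proof (intro allI impI conjI)
  fix v :: real assume v: "0 \<le> v \<and> v \<le> 1"
  have LB: "\<forall>i. 0 \<le> Lf (F i) v \<and> Lf (F i) v \<le> 1" using LR_bounds F v by blast
  show "Lf (fJoin F) v \<le> Lf (F i0) v"
    using fJoin_L[OF F] v rng_sup(4)[OF LB] by simp
  obtain pk where pk: "\<forall>i. 0 \<le> pk i \<and> pk i \<le> 1 \<and> F i (pk i) = 1" using peaks[OF F] by blast
  show "Rf (F i0) v \<le> Rf (fJoin F) v"
  proof (rule Rf_le)
    fix u assume u: "v \<le> u" "u \<le> 1"
    define x where "x = pk(i0 := u)"
    have x: "\<forall>i. 0 \<le> x i \<and> x i \<le> 1" using pk u v unfolding x_def by auto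
    have "F i0 u \<le> Inf (range (\<lambda>i. F i (x i)))"
    proof (rule cINF_greatest)
      fix i show "F i0 u \<le> F i (x i)"
        using pk NCFD_D(3)[OF spec[OF F, of i0], of u] u v unfolding x_def by auto
    qed auto
    also have "\<dots> \<le> fJoin F (Sup (range x))" by (rule fJoin_ge[OF F x])
    also have "\<dots> \<le> Rf (fJoin F) v"
    proof (rule Rf_ge[OF fJoin_NCFD[OF F]])
      show "v \<le> Sup (range x)" using rng_sup(3)[OF x, of i0] u unfolding x_def by auto
      show "Sup (range x) \<le> 1" using rng_sup(6)[OF x] .
    qed (use v in auto)
    finally show "F i0 u \<le> Rf (fJoin F) v" .
  qed (use v in auto)
qed

lemma fle_fjoin:
  assumes f: "f \<in> NCFD" and g: "g \<in> NCFD"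
  shows "fle f (fjoin f g)" "fle g (fjoin f g)"
  unfolding fle_iff[OF f fjoin_props(1)[OF f g]] fle_iff[OF g fjoin_props(1)[OF f g]]
  using fjoin_props(2,3)[OF f g] by auto

lemma fle_fmeet:
  assumes f: "f \<in> NCFD" and g: "g \<in> NCFD"
  shows "fle (fmeet f g) f" "fle (fmeet f g) g"
  unfolding fle_iff[OF fmeet_props(1)[OF f g] f] fle_iff[OF fmeet_props(1)[OF f g] g]
  using fmeet_props(2,3)[OF f g] by auto

lemma Inf_min:
  fixes a b :: "'i \<Rightarrow> real"
  assumes a: "\<forall>i. 0 \<le> a i \<and> a i \<le> 1" and b: "\<forall>i. 0 \<le> b i \<and> b i \<le> 1"
  shows "Inf (range (\<lambda>i. min (a i) (b i))) = min (Inf (range a)) (Inf (range b))"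
proof -
  have m: "\<forall>i. 0 \<le> min (a i) (b i) \<and> min (a i) (b i) \<le> 1" using a b by (simp add: min_le_iff_disj)
  show ?thesis
  proof (rule antisym)
    have "Inf (range (\<lambda>i. min (a i) (b i))) \<le> Inf (range a)"
    proof (rule cINF_greatest)
      fix i show "Inf (range (\<lambda>i. min (a i) (b i))) \<le> a i" using rng_sup(4)[OF m, of i] by linarith
    qed auto
    moreover have "Inf (range (\<lambda>i. min (a i) (b i))) \<le> Inf (range b)"
    proof (rule cINF_greatest)
      fix i show "Inf (range (\<lambda>i. min (a i) (b i))) \<le> b i" using rng_sup(4)[OF m, of i] by linarith
    qed auto
    ultimately show "Inf (range (\<lambda>i. min (a i) (b i))) \<le> min (Inf (range a)) (Inf (range b))" by simp
  next
    show "min (Inf (range a)) (Inf (range b)) \<le> Inf (range (\<lambda>i. min (a i) (b i)))"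
    proof (rule cINF_greatest)
      fix i show "min (Inf (range a)) (Inf (range b)) \<le> min (a i) (b i)"
        using rng_sup(4)[OF a, of i] rng_sup(4)[OF b, of i] by linarith
    qed auto
  qed
qed

lemma fJoin_distrib:
  fixes F H :: "'i \<Rightarrow> fuzzy"
  assumes F: "\<forall>i. F i \<in> NCFD" and H: "\<forall>i. H i \<in> NCFD"
  shows "fJoin (\<lambda>i. fjoin (F i) (H i)) = fjoin (fJoin F) (fJoin H)"
proof -
  define J where "J = (\<lambda>i. fjoin (F i) (H i))"
  have J: "\<forall>i. J i \<in> NCFD" using F H fjoin_props(1) unfolding J_def by blast
  have GF: "fJoin F \<in> NCFD" and GH: "fJoin H \<in> NCFD" using fJoin_NCFD F H by blast+
  have "fJoin J = fjoin (fJoin F) (fJoin H)"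
  proof (rule ncfd_eqI[OF fJoin_NCFD[OF J] fjoin_props(1)[OF GF GH]])
    fix v :: real assume v: "0 \<le> v" "v \<le> 1"
    have LF: "\<forall>i. 0 \<le> Lf (F i) v \<and> Lf (F i) v \<le> 1" using LR_bounds F v by blast
    have LH: "\<forall>i. 0 \<le> Lf (H i) v \<and> Lf (H i) v \<le> 1" using LR_bounds H v by blast
    have e: "(\<lambda>i. Lf (J i) v) = (\<lambda>i. min (Lf (F i) v) (Lf (H i) v))"
      using fjoin_props(2) F H v unfolding J_def by blast
    show "Lf (fJoin J) v = Lf (fjoin (fJoin F) (fJoin H)) v"
      using fJoin_L[OF J v] fJoin_L[OF F v] fJoin_L[OF H v] fjoin_props(2)[OF GF GH v]
        arg_cong[of _ _ "\<lambda>h. Inf (range h)", OF e] Inf_min[OF LF LH]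
      by simp
    show "Rf (fJoin J) v = Rf (fjoin (fJoin F) (fJoin H)) v"
    proof (rule antisym)
      have m1: "fle (fJoin F) (fJoin J)"
        by (rule fJoin_mono[OF F J]) (use fle_fjoin(1) F H J_def in blast)
      have m2: "fle (fJoin H) (fJoin J)"
        by (rule fJoin_mono[OF H J]) (use fle_fjoin(2) F H J_def in blast)
      have "Rf (fJoin F) v \<le> Rf (fJoin J) v" "Rf (fJoin H) v \<le> Rf (fJoin J) v"
        using m1 m2 fle_iff[OF GF fJoin_NCFD[OF J]] fle_iff[OF GH fJoin_NCFD[OF J]] v by auto
      then show "Rf (fjoin (fJoin F) (fJoin H)) v \<le> Rf (fJoin J) v"
        using fjoin_props(3)[OF GF GH v] by simp
    next
      obtain pF where pF: "\<forall>i. 0 \<le> pF i \<and> pF i \<le> 1 \<and> F i (pF i) = 1" using peaks[OF F] by blast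
      obtain pH where pH: "\<forall>i. 0 \<le> pH i \<and> pH i \<le> 1 \<and> H i (pH i) = 1" using peaks[OF H] by blast
      have "Rf (fJoin J) v \<le> max (Rf (fJoin F) v) (Rf (fJoin H) v)"
      proof (rule Rf_le)
        fix u assume u: "v \<le> u" "u \<le> 1"
        show "fJoin J u \<le> max (Rf (fJoin F) v) (Rf (fJoin H) v)"
        proof (rule fJoin_le)
          fix x :: "'i \<Rightarrow> real" assume x: "\<forall>i. 0 \<le> x i \<and> x i \<le> 1" "Sup (range x) = u"
          define \<alpha> where "\<alpha> = Inf (range (\<lambda>i. J i (x i)))"
          have Jx: "\<forall>i. 0 \<le> J i (x i) \<and> J i (x i) \<le> 1" using J x(1) NCFD_D(2,3) by blast
          have a1: "\<alpha> \<le> 1" using rng_sup(8)[OF Jx] unfolding \<alpha>_def .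
          have key: "\<forall>i. \<alpha> \<le> F i (x i) \<or> \<alpha> \<le> H i (x i)"
          proof
            fix i
            have "\<alpha> \<le> J i (x i)" using rng_sup(4)[OF Jx] unfolding \<alpha>_def by blast
            moreover have "J i (x i) = max (min (F i (x i)) (if pH i \<le> x i then 1 else H i (x i)))
                (min (if pF i \<le> x i then 1 else F i (x i)) (H i (x i)))"
              unfolding J_def
              by (rule fjoin_peak) (use F H pF pH x(1) in auto)
            ultimately show "\<alpha> \<le> F i (x i) \<or> \<alpha> \<le> H i (x i)" by linarith
          qed
          define y where "y i = (if \<alpha> \<le> F i (x i) then x i else pF i)" for i
          define y' where "y' i = (if \<alpha> \<le> H i (x i) then x i else pH i)" for i
          have y: "\<forall>i. 0 \<le> y i \<and> y i \<le> 1" using x(1) pF unfolding y_def by auto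
          have y': "\<forall>i. 0 \<le> y' i \<and> y' i \<le> 1" using x(1) pH unfolding y'_def by auto
          have iy: "\<alpha> \<le> Inf (range (\<lambda>i. F i (y i)))"
            by (rule cINF_greatest) (use pF a1 in \<open>auto simp: y_def\<close>)
          have iy': "\<alpha> \<le> Inf (range (\<lambda>i. H i (y' i)))"
            by (rule cINF_greatest) (use pH a1 in \<open>auto simp: y'_def\<close>)
          have cases: "v \<le> Sup (range y) \<or> v \<le> Sup (range y')"
          proof (rule ccontr)
            assume n: "\<not> ?thesis"
            have "Sup (range x) \<le> max (Sup (range y)) (Sup (range y'))"
            proof (rule cSUP_least)
              fix i
              show "x i \<le> max (Sup (range y)) (Sup (range y'))"
                using key[rule_format, of i] rng_sup(3)[OF y, of i] rng_sup(3)[OF y', of i]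
                unfolding y_def y'_def by (auto split: if_splits)
            qed auto
            then show False using n x(2) u by auto
          qed
          show "\<alpha> \<le> max (Rf (fJoin F) v) (Rf (fJoin H) v)"
          proof (cases "v \<le> Sup (range y)")
            case True
            have "\<alpha> \<le> fJoin F (Sup (range y))" using iy fJoin_ge[OF F y] by linarith
            also have "\<dots> \<le> Rf (fJoin F) v"
              by (rule Rf_ge[OF GF]) (use True v rng_sup(6)[OF y] in auto)
            finally show ?thesis by linarith
          next
            case False
            then have T: "v \<le> Sup (range y')" using cases by auto
            have "\<alpha> \<le> fJoin H (Sup (range y'))" using iy' fJoin_ge[OF H y'] by linarith
            also have "\<dots> \<le> Rf (fJoin H) v"
              by (rule Rf_ge[OF GH]) (use T v rng_sup(6)[OF y'] in auto)
            finally show ?thesis by linarith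
          qed
        qed (use u v in auto)
      qed (use v in auto)
      then show "Rf (fJoin J) v \<le> Rf (fjoin (fJoin F) (fJoin H)) v"
        using fjoin_props(3)[OF GF GH v] by simp
    qed
  qed
  then show ?thesis unfolding J_def .
qed

lemmas lat_simps = fle_iff fmeet_props fjoin_props

lemma lat_join_lub:
  assumes "a \<in> NCFD" "b \<in> NCFD" "m \<in> NCFD" "fle a m" "fle b m"
  shows "fle (fjoin a b) m"
  using assms by (auto simp: lat_simps)

lemma lat_meet_lb:
  assumes "a \<in> NCFD" "b \<in> NCFD" "m \<in> NCFD" "fle a m"
  shows "fle (fmeet a b) m"
  using assms by (auto simp: lat_simps)

lemma lat_meet_glb:
  assumes "a \<in> NCFD" "b \<in> NCFD" "g \<in> NCFD" "fle g a" "fle g b"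
  shows "fle g (fmeet a b)"
  using assms by (auto simp: lat_simps)

lemma lat_antisym:
  assumes "a \<in> NCFD" "b \<in> NCFD" "fle a b" "fle b a"
  shows "a = b"
  using assms by (intro ncfd_eqI) (auto simp: lat_simps intro: antisym)

lemma lat_ctrl_join:
  assumes N: "a \<in> NCFD" "b \<in> NCFD" "c \<in> NCFD" "d \<in> NCFD" "a' \<in> NCFD" "b' \<in> NCFD"
    and h: "fle (fmeet (fmeet a c) d) a'" "fle (fmeet (fmeet b c) d) b'"
  shows "fle (fmeet (fmeet (fjoin a b) c) d) (fjoin a' b')"
  using assms apply (auto simp: lat_simps)
  subgoal for v using h apply (auto simp: lat_simps dest!: spec[of _ v]) by (smt (verit))
  subgoal for v using h apply (auto simp: lat_simps dest!: spec[of _ v]) by (smt (verit))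
  done

lemma lat_ctrl_meet:
  assumes N: "a \<in> NCFD" "b \<in> NCFD" "c \<in> NCFD" "d \<in> NCFD" "a' \<in> NCFD" "b' \<in> NCFD"
    and h: "fle (fmeet (fmeet a c) d) a'" "fle (fmeet (fmeet b c) d) b'"
  shows "fle (fmeet (fmeet (fmeet a b) c) d) (fmeet a' b')"
  using assms by (auto simp: lat_simps)



lemma bfl_N: "is_bflang K \<Longrightarrow> K s \<in> NCFD" by (simp add: is_bflang_def)

lemma pr_N: "is_bflang K \<Longrightarrow> pr K s \<in> NCFD"
  unfolding pr_def by (rule fJoin_NCFD) (simp add: bfl_N)

lemma union_bfl: "is_bflang K1 \<Longrightarrow> is_bflang K2 \<Longrightarrow> is_bflang (bf_union K1 K2)"
  unfolding is_bflang_def bf_union_def using fjoin_props(1) by blast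

lemma inter_bfl: "is_bflang K1 \<Longrightarrow> is_bflang K2 \<Longrightarrow> is_bflang (bf_inter K1 K2)"
  unfolding is_bflang_def bf_inter_def using fmeet_props(1) by blast

lemma pr_union: "is_bflang K1 \<Longrightarrow> is_bflang K2 \<Longrightarrow> pr (bf_union K1 K2) = bf_union (pr K1) (pr K2)"
  unfolding pr_def bf_union_def
  by (rule ext, rule fJoin_distrib) (simp_all add: bfl_N)

lemma part3:
  assumes M: "is_bflang M" and S: "\<forall>\<sigma>. Sig_uc \<sigma> \<in> NCFD"
    and K1: "is_bflang K1" and K2: "is_bflang K2"
    and c1: "bf_controllable K1 M Sig_uc" and c2: "bf_controllable K2 M Sig_uc"
    and e: "bf_inter (pr K1) (pr K2) = pr (bf_inter K1 K2)"
  shows "bf_controllable (bf_inter K1 K2) M Sig_uc"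
  unfolding bf_controllable_def
proof (intro conjI allI)
  show "bf_subset (bf_inter K1 K2) M"
    unfolding bf_subset_def bf_inter_def
    using c1 lat_meet_lb bfl_N[OF K1] bfl_N[OF K2] bfl_N[OF M]
    unfolding bf_controllable_def bf_subset_def by blast
  fix s \<sigma>
  show "fle (fmeet (fmeet (pr (bf_inter K1 K2) s) (Sig_uc \<sigma>)) (M (s @ [\<sigma>]))) (pr (bf_inter K1 K2) (s @ [\<sigma>]))"
  proof -
    have ee: "\<And>t. pr (bf_inter K1 K2) t = fmeet (pr K1 t) (pr K2 t)"
      using e[symmetric] by (simp add: bf_inter_def)
    show ?thesis unfolding ee
    by (rule lat_ctrl_meet) (use c1 c2 pr_N[OF K1] pr_N[OF K2] S bfl_N[OF M] in \<open>auto simp: bf_controllable_def\<close>)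
  qed
qed

theorem proposition5:
  fixes M K1 K2 :: "'a bflang" and Sig_uc :: "'a \<Rightarrow> fuzzy"
  assumes "\<forall>\<sigma>. Sig_uc \<sigma> \<in> NCFD"
    and "is_bflang M" and "pr M = M"
    and "is_bflang K1" and "is_bflang K2"
  shows "(bf_controllable K1 M Sig_uc \<and> bf_controllable K2 M Sig_uc
            \<longrightarrow> bf_controllable (bf_union K1 K2) M Sig_uc)
     \<and> (pr K1 = K1 \<and> pr K2 = K2 \<longrightarrow> pr (bf_union K1 K2) = bf_union K1 K2)
     \<and> (bf_controllable K1 M Sig_uc \<and> bf_controllable K2 M Sig_uc
          \<and> bf_inter (pr K1) (pr K2) = pr (bf_inter K1 K2)
            \<longrightarrow> bf_controllable (bf_inter K1 K2) M Sig_uc)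
     \<and> (pr K1 = K1 \<and> bf_controllable K1 M Sig_uc \<and> pr K2 = K2 \<and> bf_controllable K2 M Sig_uc
            \<longrightarrow> bf_inter (pr K1) (pr K2) = pr (bf_inter K1 K2)
                \<and> bf_controllable (bf_inter K1 K2) M Sig_uc)"
proof (intro conjI impI)
  note S = assms(1) and M = assms(2) and K1 = assms(4) and K2 = assms(5)
  {
    assume c: "bf_controllable K1 M Sig_uc \<and> bf_controllable K2 M Sig_uc"
    show "bf_controllable (bf_union K1 K2) M Sig_uc"
      unfolding bf_controllable_def
    proof (intro conjI allI)
      show "bf_subset (bf_union K1 K2) M"
        unfolding bf_subset_def bf_union_def
        using c lat_join_lub bfl_N[OF K1] bfl_N[OF K2] bfl_N[OF M]
        unfolding bf_controllable_def bf_subset_def by blast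
      fix s \<sigma>
      show "fle (fmeet (fmeet (pr (bf_union K1 K2) s) (Sig_uc \<sigma>)) (M (s @ [\<sigma>]))) (pr (bf_union K1 K2) (s @ [\<sigma>]))"
      proof -
        have ee: "\<And>t. pr (bf_union K1 K2) t = fjoin (pr K1 t) (pr K2 t)"
          using pr_union[OF K1 K2] by (simp add: bf_union_def)
        show ?thesis unfolding ee
        by (rule lat_ctrl_join) (use c pr_N[OF K1] pr_N[OF K2] S bfl_N[OF M] in \<open>auto simp: bf_controllable_def\<close>)
      qed
    qed
  }
  {
    assume "pr K1 = K1 \<and> pr K2 = K2"
    then show "pr (bf_union K1 K2) = bf_union K1 K2" using pr_union[OF K1 K2] by simp
  }
  {
    assume "bf_controllable K1 M Sig_uc \<and> bf_controllable K2 M Sig_uc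
          \<and> bf_inter (pr K1) (pr K2) = pr (bf_inter K1 K2)"
    then show "bf_controllable (bf_inter K1 K2) M Sig_uc" using part3[OF M S K1 K2] by blast
  }
  {
    assume h: "pr K1 = K1 \<and> bf_controllable K1 M Sig_uc \<and> pr K2 = K2 \<and> bf_controllable K2 M Sig_uc"
    have eq: "bf_inter (pr K1) (pr K2) = pr (bf_inter K1 K2)"
    proof
      fix s
      define G where "G = fJoin (\<lambda>u. fmeet (K1 (s @ u)) (K2 (s @ u)))"
      have N1: "\<forall>u. K1 (s @ u) \<in> NCFD" and N2: "\<forall>u. K2 (s @ u) \<in> NCFD"
        using bfl_N[OF K1] bfl_N[OF K2] by blast+
      have N12: "\<forall>u. fmeet (K1 (s @ u)) (K2 (s @ u)) \<in> NCFD" using N1 N2 fmeet_props(1) by blast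
      have GN: "G \<in> NCFD" unfolding G_def by (rule fJoin_NCFD[OF N12])
      have p1: "fJoin (\<lambda>u. K1 (s @ u)) = K1 s" proof -
        have "pr K1 s = K1 s" using h by simp
        then show ?thesis by (simp add: pr_def)
      qed
      have p2: "fJoin (\<lambda>u. K2 (s @ u)) = K2 s" proof -
        have "pr K2 s = K2 s" using h by simp
        then show ?thesis by (simp add: pr_def)
      qed
      have g1: "fle G (K1 s)" unfolding G_def p1[symmetric]
        by (rule fJoin_mono[OF N12 N1]) (use N1 N2 fle_fmeet(1) in blast)
      have g2: "fle G (K2 s)" unfolding G_def p2[symmetric]
        by (rule fJoin_mono[OF N12 N2]) (use N1 N2 fle_fmeet(2) in blast)
      have g3: "fle G (fmeet (K1 s) (K2 s))"
        by (rule lat_meet_glb[OF bfl_N[OF K1] bfl_N[OF K2] GN g1 g2])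
      have g4: "fle (fmeet (K1 s) (K2 s)) G"
        using fJoin_member[OF N12, of "[]"] unfolding G_def by simp
      have "fmeet (K1 s) (K2 s) = G"
        by (rule lat_antisym[OF fmeet_props(1)[OF bfl_N[OF K1] bfl_N[OF K2]] GN g4 g3])
      then show "bf_inter (pr K1) (pr K2) s = pr (bf_inter K1 K2) s"
        unfolding bf_inter_def pr_def using p1 p2 G_def by simp
    qed
    show "bf_inter (pr K1) (pr K2) = pr (bf_inter K1 K2)" by (rule eq)
    show "bf_controllable (bf_inter K1 K2) M Sig_uc" using part3[OF M S K1 K2] h eq by blast
  }
qed


end
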